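(* Fix $\theta$. Suppose the predictions are stable in the sense that $\sqrt{K\,\mathrm{Var}(\nabla\ell_\theta(X,f^{(1)}(X))-\nabla\ell_\theta(X,\bar f(X))\mid f^{(1)})}\xrightarrow{L^1}0$ entrywise as $n\to\infty$. For $j\in[K]$ define $$L_j=\frac{1}{\sqrt n}\sum_{i\in I_j}\Big(\nabla\ell_\theta(X_i,f^{(j)}(X_i))-\mathbb{E}_X[\nabla\ell_\theta(X,f^{(j)}(X))]-\big(\nabla\ell_\theta(X_i,\bar f(X_i))-\mathbb{E}[\nabla\ell_\theta(X,\bar f(X))]\big)\Big).$$ Then $\sum_{j=1}^K L_j\xrightarrow{p}0$.
   Context: Setting: $(X_i,Y_i)_{i\le n}$ i.i.d. from $\mathbb{P}$; $X$ is an independent generic feature draw. $\ell_\theta(x,y)$ is a loss differentiable in $\theta\in\mathbb{R}^d$, $\nabla$ is the gradient in $\theta$. Folds $I_1,\dots,I_K$ are consecutive blocks of size $n/K$ of $\{1,\dots,n\}$; $f^{(j)}$ is trained by a possibly randomized algorithm on $\{(X_i,Y_i)\}_{i\notin I_j}$; $\bar f(x)=\mathbb{E}[f^{(1)}(x)]$. $\mathbb{E}_X$ denotes expectation over the independent $X$ conditionally on everything else; $\mathrm{Var}(\cdot\mid f^{(1)})$ is the conditional covariance matrix. Second moments are finite. *)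

theory Defs
  imports "HOL-Probability.Probability"
begin

definition grad :: "('d::real_inner \<Rightarrow> 'x \<Rightarrow> 'y \<Rightarrow> real) \<Rightarrow> 'd \<Rightarrow> 'x \<Rightarrow> 'y \<Rightarrow> 'd" where
  "grad l t0 x y = (THE D. GDERIV (\<lambda>t. l t x y) t0 :> D)"

text \<open>Folds (0-indexed, j < K): consecutive blocks of size b = n div K.\<close>
definition fold_block :: "nat \<Rightarrow> nat \<Rightarrow> nat set" where
  "fold_block b j = {j * b ..< (j + 1) * b}"

text \<open>k-th index (in increasing order) of the complement of fold j in {..<n}.\<close>
definition train_idx :: "nat \<Rightarrow> nat \<Rightarrow> nat \<Rightarrow> nat" where
  "train_idx b j k = (if k < j * b then k else k + b)"

definition train_data :: "nat \<Rightarrow> nat \<Rightarrow> nat \<Rightarrow> (nat \<Rightarrow> 'w \<Rightarrow> 'z) \<Rightarrow> 'w \<Rightarrow> nat \<Rightarrow> 'z" where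
  "train_data n b j Z w = (\<lambda>k\<in>{..< n - b}. Z (train_idx b j k) w)"

text \<open>The model f^(j): algorithm A run on the training data of fold j with its own
  internal randomness xi j.\<close>
definition fitted :: "((nat \<Rightarrow> 'z) \<Rightarrow> 'r \<Rightarrow> 'x \<Rightarrow> 'y) \<Rightarrow> nat \<Rightarrow> nat \<Rightarrow> (nat \<Rightarrow> 'w \<Rightarrow> 'z)
    \<Rightarrow> (nat \<Rightarrow> 'w \<Rightarrow> 'r) \<Rightarrow> nat \<Rightarrow> 'w \<Rightarrow> 'x \<Rightarrow> 'y" where
  "fitted A n b Z xi j w = A (train_data n b j Z w) (xi j w)"

definition fbar :: "'w measure \<Rightarrow> ('w \<Rightarrow> 'x \<Rightarrow> 'y::{banach,second_countable_topology}) \<Rightarrow> 'x \<Rightarrow> 'y" where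
  "fbar M f x = (\<integral>w. f w x \<partial>M)"

text \<open>Conditional variance of coordinate e (e a basis vector) of
  G(X, f(X)) - G(X, fb(X)) given the (fixed) model f, X distributed as PX.\<close>
definition cond_var_coord :: "'x measure \<Rightarrow> ('x \<Rightarrow> 'y \<Rightarrow> 'd::euclidean_space) \<Rightarrow> ('x \<Rightarrow> 'y)
    \<Rightarrow> ('x \<Rightarrow> 'y) \<Rightarrow> 'd \<Rightarrow> real" where
  "cond_var_coord PX G f fb e =
     (\<integral>x. ((G x (f x) - G x (fb x)) \<bullet> e)\<^sup>2 \<partial>PX) - (\<integral>x. (G x (f x) - G x (fb x)) \<bullet> e \<partial>PX)\<^sup>2"

definition L_fold :: "nat \<Rightarrow> nat set \<Rightarrow> 'x measure \<Rightarrow> ('x \<Rightarrow> 'y \<Rightarrow> 'd::euclidean_space)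
    \<Rightarrow> ('x \<Rightarrow> 'y) \<Rightarrow> ('x \<Rightarrow> 'y) \<Rightarrow> (nat \<Rightarrow> 'x) \<Rightarrow> 'd" where
  "L_fold n I PX G f fb Xs =
     (1 / sqrt (real n)) *\<^sub>R (\<Sum>i\<in>I. (G (Xs i) (f (Xs i)) - (\<integral>x. G x (f x) \<partial>PX))
                                  - (G (Xs i) (fb (Xs i)) - (\<integral>x. G x (fb x) \<partial>PX)))"

end

theory Submission
  imports Defs
begin

lemma distr_reassoc:
  assumes A: "prob_space A" and B: "prob_space B" and C: "prob_space C"
  shows "distr ((A \<Otimes>\<^sub>M B) \<Otimes>\<^sub>M C) ((A \<Otimes>\<^sub>M C) \<Otimes>\<^sub>M B) (\<lambda>x. ((fst (fst x), snd x), snd (fst x))) = (A \<Otimes>\<^sub>M C) \<Otimes>\<^sub>M B"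
proof (rule measure_eqI)
  interpret A: prob_space A by fact
  interpret B: prob_space B by fact
  interpret C: prob_space C by fact
  interpret AB: pair_prob_space A B ..
  interpret AC: pair_prob_space A C ..
  interpret BC: pair_prob_space B C ..
  interpret ABC: pair_prob_space "A \<Otimes>\<^sub>M B" C ..
  interpret ACB: pair_prob_space "A \<Otimes>\<^sub>M C" B ..
  fix S assume S[measurable]: "S \<in> sets (distr ((A \<Otimes>\<^sub>M B) \<Otimes>\<^sub>M C) ((A \<Otimes>\<^sub>M C) \<Otimes>\<^sub>M B) (\<lambda>x. ((fst (fst x), snd x), snd (fst x))))"
  then have S': "S \<in> sets ((A \<Otimes>\<^sub>M C) \<Otimes>\<^sub>M B)" by simp
  have "emeasure (distr ((A \<Otimes>\<^sub>M B) \<Otimes>\<^sub>M C) ((A \<Otimes>\<^sub>M C) \<Otimes>\<^sub>M B) (\<lambda>x. ((fst (fst x), snd x), snd (fst x)))) S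
     = (\<integral>\<^sup>+x. indicator S ((\<lambda>x. ((fst (fst x), snd x), snd (fst x))) x) \<partial>((A \<Otimes>\<^sub>M B) \<Otimes>\<^sub>M C))"
    using S' by (subst emeasure_distr) (auto simp: nn_integral_indicator[symmetric] simp del: nn_integral_indicator intro!: nn_integral_cong split: split_indicator)
  also have "\<dots> = (\<integral>\<^sup>+ab. \<integral>\<^sup>+c. indicator S ((fst ab, c), snd ab) \<partial>C \<partial>(A \<Otimes>\<^sub>M B))"
    using S' C.nn_integral_fst[of "\<lambda>x. indicator S ((fst (fst x), snd x), snd (fst x))" "A \<Otimes>\<^sub>M B"] by simp
  also have "\<dots> = (\<integral>\<^sup>+a. \<integral>\<^sup>+b. \<integral>\<^sup>+c. indicator S ((a, c), b) \<partial>C \<partial>B \<partial>A)"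
    using S' B.nn_integral_fst[of "\<lambda>ab. \<integral>\<^sup>+c. indicator S ((fst ab, c), snd ab) \<partial>C" A] by simp
  also have "\<dots> = (\<integral>\<^sup>+a. \<integral>\<^sup>+c. \<integral>\<^sup>+b. indicator S ((a, c), b) \<partial>B \<partial>C \<partial>A)"
    using S' by (intro nn_integral_cong BC.Fubini'[symmetric]) measurable
  also have "\<dots> = (\<integral>\<^sup>+ac. \<integral>\<^sup>+b. indicator S (ac, b) \<partial>B \<partial>(A \<Otimes>\<^sub>M C))"
    using S' C.nn_integral_fst[of "\<lambda>ac. \<integral>\<^sup>+b. indicator S (ac, b) \<partial>B" A] by simp
  also have "\<dots> = emeasure ((A \<Otimes>\<^sub>M C) \<Otimes>\<^sub>M B) S"
    using S' B.nn_integral_fst[of "indicator S" "A \<Otimes>\<^sub>M C"] by simp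
  finally show "emeasure (distr ((A \<Otimes>\<^sub>M B) \<Otimes>\<^sub>M C) ((A \<Otimes>\<^sub>M C) \<Otimes>\<^sub>M B) (\<lambda>x. ((fst (fst x), snd x), snd (fst x)))) S = emeasure ((A \<Otimes>\<^sub>M C) \<Otimes>\<^sub>M B) S" .
qed simp

lemma train_idx_props:
  assumes "b * K = n" "j < K" "k < n - b"
  shows "train_idx b j k < n" "train_idx b j k \<notin> fold_block b j"
proof -
  have "(j + 1) * b \<le> n" using assms by (metis Suc_eq_plus1 Suc_leI mult.commute mult_le_mono2)
  then show "train_idx b j k < n" "train_idx b j k \<notin> fold_block b j"
    using assms by (auto simp: train_idx_def fold_block_def)
qed

lemma train_idx_inj: "inj_on (train_idx b j) {..< n - b}"
  unfolding inj_on_def train_idx_def by auto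

lemma distr_fold_split:
  fixes P :: "'a measure" and R :: "'b measure"
  assumes P: "prob_space P" and R: "prob_space R"
    and nK: "b * K = n" and j: "j < K"
  defines "I \<equiv> fold_block b j"
  shows "distr (PiM {..<n} (\<lambda>_. P) \<Otimes>\<^sub>M PiM {..<K} (\<lambda>_. R))
           ((PiM {..<n-b} (\<lambda>_. P) \<Otimes>\<^sub>M R) \<Otimes>\<^sub>M PiM I (\<lambda>_. P))
           (\<lambda>(z, r). ((\<lambda>k\<in>{..<n-b}. z (train_idx b j k), r j), restrict z I))
       = (PiM {..<n-b} (\<lambda>_. P) \<Otimes>\<^sub>M R) \<Otimes>\<^sub>M PiM I (\<lambda>_. P)" (is ?A)
    and "(\<lambda>(z, r). ((\<lambda>k\<in>{..<n-b}. z (train_idx b j k), r j), restrict z I)) \<in>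
       measurable (PiM {..<n} (\<lambda>_. P) \<Otimes>\<^sub>M PiM {..<K} (\<lambda>_. R))
           ((PiM {..<n-b} (\<lambda>_. P) \<Otimes>\<^sub>M R) \<Otimes>\<^sub>M PiM I (\<lambda>_. P))" (is ?B)
proof -
  define J where "J = {..<n} - I"
  have IJ: "I \<inter> J = {}" "J \<union> I = {..<n}" "finite I" "finite J"
  proof -
    have "(j + 1) * b \<le> n" using nK j by (metis Suc_eq_plus1 Suc_leI mult.commute mult_le_mono2)
    then have "I \<subseteq> {..<n}" unfolding I_def fold_block_def by auto
    then show "I \<inter> J = {}" "J \<union> I = {..<n}" "finite I" "finite J"
      unfolding J_def by (auto simp: I_def fold_block_def)
  qed
  interpret P: prob_space P by fact
  interpret R: prob_space R by fact
  interpret PP: product_prob_space "\<lambda>_. P" UNIV by unfold_locales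
  interpret PR: product_prob_space "\<lambda>_. R" UNIV by unfold_locales
  interpret PJ: prob_space "PiM J (\<lambda>_. P)" by (rule prob_space_PiM) (rule P)
  interpret PI: prob_space "PiM I (\<lambda>_. P)" by (rule prob_space_PiM) (rule P)
  interpret PK: prob_space "PiM {..<K} (\<lambda>_. R)" by (rule prob_space_PiM) (rule R)
  interpret PZ: prob_space "PiM {..<n} (\<lambda>_. P)" by (rule prob_space_PiM) (rule P)
  interpret PJI: pair_prob_space "PiM J (\<lambda>_. P)" "PiM I (\<lambda>_. P)" ..
  have t: "train_idx b j k \<in> J" if "k < n - b" for k
    using train_idx_props[OF nK j that] unfolding J_def I_def by auto
  have merge: "distr (PiM J (\<lambda>_. P) \<Otimes>\<^sub>M PiM I (\<lambda>_. P)) (PiM {..<n} (\<lambda>_. P)) (merge J I) = PiM {..<n} (\<lambda>_. P)"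
    using PP.distr_merge[of J I] IJ by (simp add: Un_commute Int_commute)
  have mm[measurable]: "merge J I \<in> measurable (PiM J (\<lambda>_. P) \<Otimes>\<^sub>M PiM I (\<lambda>_. P)) (PiM {..<n} (\<lambda>_. P))"
    using measurable_merge[of J I "\<lambda>_. P"] IJ by simp
  have Om: "PiM {..<n} (\<lambda>_. P) \<Otimes>\<^sub>M PiM {..<K} (\<lambda>_. R) =
     distr ((PiM J (\<lambda>_. P) \<Otimes>\<^sub>M PiM I (\<lambda>_. P)) \<Otimes>\<^sub>M PiM {..<K} (\<lambda>_. R))
        (PiM {..<n} (\<lambda>_. P) \<Otimes>\<^sub>M PiM {..<K} (\<lambda>_. R)) (\<lambda>(x, r). (merge J I x, r))"
  proof -
    have "distr (PiM J (\<lambda>_. P) \<Otimes>\<^sub>M PiM I (\<lambda>_. P)) (PiM {..<n} (\<lambda>_. P)) (merge J I) \<Otimes>\<^sub>M distr (PiM {..<K} (\<lambda>_. R)) (PiM {..<K} (\<lambda>_. R)) (\<lambda>r. r)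
      = distr ((PiM J (\<lambda>_. P) \<Otimes>\<^sub>M PiM I (\<lambda>_. P)) \<Otimes>\<^sub>M PiM {..<K} (\<lambda>_. R))
        (PiM {..<n} (\<lambda>_. P) \<Otimes>\<^sub>M PiM {..<K} (\<lambda>_. R)) (\<lambda>(x, r). (merge J I x, r))"
      using mm by (intro pair_measure_distr) (auto simp: distr_id PK.sigma_finite_measure)
    then show ?thesis by (simp add: merge distr_id)
  qed
  define T where "T = (PiM {..<n-b} (\<lambda>_. P) \<Otimes>\<^sub>M R) \<Otimes>\<^sub>M PiM I (\<lambda>_. P)"
  define \<psi> :: "(nat \<Rightarrow> 'a) \<times> (nat \<Rightarrow> 'b) \<Rightarrow> ((nat \<Rightarrow> 'a) \<times> 'b) \<times> (nat \<Rightarrow> 'a)" where "\<psi> = (\<lambda>(z, r). ((\<lambda>k\<in>{..<n-b}. z (train_idx b j k), r j), restrict z I))"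
  have tJ: "train_idx b j \<in> {..<n-b} \<rightarrow> J" using t by auto
  have tn: "train_idx b j k \<in> {..<n}" if "k < n - b" for k using t[OF that] IJ by auto
  have psi_m[measurable]: "\<psi> \<in> measurable (PiM {..<n} (\<lambda>_. P) \<Otimes>\<^sub>M PiM {..<K} (\<lambda>_. R)) T"
  proof -
    have 1: "(\<lambda>x. \<lambda>k\<in>{..<n-b}. fst x (train_idx b j k)) \<in> measurable (PiM {..<n} (\<lambda>_. P) \<Otimes>\<^sub>M PiM {..<K} (\<lambda>_. R)) (PiM {..<n-b} (\<lambda>_. P))"
      by (rule measurable_restrict) (use tn in measurable)
    have 2: "(\<lambda>x. restrict (fst x) I) \<in> measurable (PiM {..<n} (\<lambda>_. P) \<Otimes>\<^sub>M PiM {..<K} (\<lambda>_. R)) (PiM I (\<lambda>_. P))"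
      using IJ by (intro measurable_compose[OF measurable_fst] measurable_restrict_subset) auto
    have 3: "(\<lambda>x. snd x j) \<in> measurable (PiM {..<n} (\<lambda>_. P) \<Otimes>\<^sub>M PiM {..<K} (\<lambda>_. R)) R"
      by measurable (simp add: j)
    show ?thesis unfolding \<psi>_def T_def split_beta' using 1 2 3 by measurable
  qed
  let ?PJ = "PiM J (\<lambda>_. P)" and ?PI = "PiM I (\<lambda>_. P)" and ?PK = "PiM {..<K} (\<lambda>_. R)"
    and ?P' = "PiM {..<n-b} (\<lambda>_. P)"
  have reidx: "distr ?PJ ?P' (\<lambda>a. \<lambda>k\<in>{..<n-b}. a (train_idx b j k)) = ?P'"
    using distr_PiM_reindex[of J "\<lambda>_. P" "train_idx b j" "{..<n-b}"] train_idx_inj tJ P by simp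
  have comp: "distr ?PK R (\<lambda>r. r j) = R"
    using distr_PiM_component[of "{..<K}" "\<lambda>_. R" j] R j by simp
  have r1[measurable]: "(\<lambda>a. \<lambda>k\<in>{..<n-b}. a (train_idx b j k)) \<in> measurable ?PJ ?P'"
    by (rule measurable_restrict) (use t in measurable)
  have r2[measurable]: "(\<lambda>r. r j) \<in> measurable ?PK R" by measurable (simp add: j)
  have g: "distr (?PJ \<Otimes>\<^sub>M ?PK) (?P' \<Otimes>\<^sub>M R) (\<lambda>(a, r). (\<lambda>k\<in>{..<n-b}. a (train_idx b j k), r j)) = ?P' \<Otimes>\<^sub>M R"
    using pair_measure_distr[OF r1 r2] by (simp add: reidx comp R.sigma_finite_measure)
  interpret PJK: pair_prob_space ?PJ ?PK ..
  have gm[measurable]: "(\<lambda>(a, r). (\<lambda>k\<in>{..<n-b}. a (train_idx b j k), r j)) \<in> measurable (?PJ \<Otimes>\<^sub>M ?PK) (?P' \<Otimes>\<^sub>M R)"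
    by measurable
  have h: "distr ((?PJ \<Otimes>\<^sub>M ?PK) \<Otimes>\<^sub>M ?PI) T (\<lambda>(x, c). ((\<lambda>(a, r). (\<lambda>k\<in>{..<n-b}. a (train_idx b j k), r j)) x, c)) = T"
    using pair_measure_distr[OF gm measurable_ident[of ?PI]] unfolding T_def by (simp add: g id_def PI.sigma_finite_measure)
  interpret PJI_K: pair_prob_space "?PJ \<Otimes>\<^sub>M ?PI" ?PK ..
  have "distr (PiM {..<n} (\<lambda>_. P) \<Otimes>\<^sub>M ?PK) T \<psi>
     = distr ((?PJ \<Otimes>\<^sub>M ?PI) \<Otimes>\<^sub>M ?PK) T (\<psi> \<circ> (\<lambda>(x, r). (merge J I x, r)))"
    by (subst Om, rule distr_distr) (use psi_m in measurable)
  also have "\<dots> = distr ((?PJ \<Otimes>\<^sub>M ?PI) \<Otimes>\<^sub>M ?PK) T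
      (\<lambda>x. ((\<lambda>k\<in>{..<n-b}. fst (fst x) (train_idx b j k), snd x j), snd (fst x)))"
  proof (rule distr_cong)
    fix x assume x: "x \<in> space ((?PJ \<Otimes>\<^sub>M ?PI) \<Otimes>\<^sub>M ?PK)"
    obtain a c r where xe: "x = ((a, c), r)" by (metis prod.collapse)
    have c: "c \<in> extensional I" using x by (auto simp: xe space_pair_measure space_PiM PiE_def)
    show "(\<psi> \<circ> (\<lambda>(x, r). (merge J I x, r))) x = ((\<lambda>k\<in>{..<n-b}. fst (fst x) (train_idx b j k), snd x j), snd (fst x))"
      using c IJ t by (auto simp: xe \<psi>_def merge_def restrict_def extensional_def fun_eq_iff)
  qed auto
  also have "\<dots> = distr (distr ((?PJ \<Otimes>\<^sub>M ?PI) \<Otimes>\<^sub>M ?PK) ((?PJ \<Otimes>\<^sub>M ?PK) \<Otimes>\<^sub>M ?PI)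
          (\<lambda>x. ((fst (fst x), snd x), snd (fst x)))) T
       (\<lambda>(x, c). ((\<lambda>(a, r). (\<lambda>k\<in>{..<n-b}. a (train_idx b j k), r j)) x, c))"
    by (subst distr_distr) (auto simp: comp_def split_beta' T_def)
  also have "\<dots> = T" by (simp add: distr_reassoc[OF PJ.prob_space_axioms PI.prob_space_axioms PK.prob_space_axioms] h)
  finally have "distr (PiM {..<n} (\<lambda>_. P) \<Otimes>\<^sub>M ?PK) T \<psi> = T" .
  then show ?A unfolding T_def \<psi>_def .
  show ?B using psi_m unfolding T_def \<psi>_def .
qed

lemma PiM_comp_integral:
  fixes g :: "'p \<Rightarrow> real"
  assumes Q: "prob_space Q" and i: "i \<in> I" and g: "g \<in> borel_measurable Q"
  shows "integrable (PiM I (\<lambda>_. Q)) (\<lambda>x. g (x i)) \<longleftrightarrow> integrable Q g"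
    and "integral\<^sup>L (PiM I (\<lambda>_. Q)) (\<lambda>x. g (x i)) = integral\<^sup>L Q g"
proof -
  have d: "distr (PiM I (\<lambda>_. Q)) Q (\<lambda>x. x i) = Q"
    using distr_PiM_component[of I "\<lambda>_. Q" i] Q i by simp
  have m: "(\<lambda>x. x i) \<in> measurable (PiM I (\<lambda>_. Q)) Q" using i by measurable
  show "integrable (PiM I (\<lambda>_. Q)) (\<lambda>x. g (x i)) \<longleftrightarrow> integrable Q g"
    using integrable_distr_eq[OF m g] d by simp
  show "integral\<^sup>L (PiM I (\<lambda>_. Q)) (\<lambda>x. g (x i)) = integral\<^sup>L Q g"
    using integral_distr[OF m g] d by simp
qed

lemma inner_bound:
  fixes Q :: "'p measure" and c :: "'p \<Rightarrow> real"
  assumes Q: "prob_space Q" and fin: "finite I" and cm[measurable]: "c \<in> borel_measurable Q"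
    and c2: "integrable Q (\<lambda>p. (c p)\<^sup>2)" and c0: "integral\<^sup>L Q c = 0"
  shows "(\<integral>\<^sup>+ xs. ennreal \<bar>\<Sum>i\<in>I. c (xs i)\<bar> \<partial>PiM I (\<lambda>_. Q)) \<le> ennreal (sqrt (card I * integral\<^sup>L Q (\<lambda>p. (c p)\<^sup>2)))"
proof -
  interpret Q: prob_space Q by fact
  interpret PP: product_prob_space "\<lambda>_. Q" UNIV by unfold_locales
  interpret PI: prob_space "PiM I (\<lambda>_. Q)" by (rule prob_space_PiM) (rule Q)
  have ci: "integrable Q c" by (rule Q.square_integrable_imp_integrable[OF cm c2])
  have cross: "integrable (PiM I (\<lambda>_. Q)) (\<lambda>x. c (x i) * c (x k)) \<and>
      integral\<^sup>L (PiM I (\<lambda>_. Q)) (\<lambda>x. c (x i) * c (x k)) = (if i = k then integral\<^sup>L Q (\<lambda>p. (c p)\<^sup>2) else 0)"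
    if i: "i \<in> I" and k: "k \<in> I" for i k
  proof (cases "i = k")
    case True
    have m: "(\<lambda>p. (c p)\<^sup>2) \<in> borel_measurable Q" by measurable
    show ?thesis using PiM_comp_integral[OF Q i m] c2 True by (simp add: power2_eq_square)
  next
    case False
    define f where "f = (\<lambda>l p. if l = i \<or> l = k then c p else 1)"
    have fi: "integrable Q (f l)" if "l \<in> I" for l
      by (cases "l = i \<or> l = k") (simp_all add: f_def ci)
    have pe: "(\<Prod>l\<in>I. f l (x l)) = c (x i) * c (x k)" for x
    proof -
      have "(\<Prod>l\<in>I. f l (x l)) = (\<Prod>l\<in>I. if l \<in> {i, k} then c (x l) else 1)"
        by (auto simp: f_def intro!: prod.cong)
      also have "\<dots> = (\<Prod>l\<in>{i,k}. c (x l))"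
        using fin i k by (subst prod.If_cases) (auto intro!: arg_cong2[where f=prod] simp: Int_absorb1)
      also have "\<dots> = c (x i) * c (x k)" using False by simp
      finally show ?thesis .
    qed
    have "(\<Prod>l\<in>I. integral\<^sup>L Q (f l)) = 0"
      using fin i c0 by (intro prod_zero bexI[of _ i]) (auto simp: f_def)
    then show ?thesis
      using PP.product_integrable_prod[of I f, OF fin fi] PP.product_integral_prod[of I f, OF fin fi] False
      by (simp add: pe)
  qed
  define S where "S = (\<lambda>x. \<Sum>i\<in>I. c (x i))"
  have S2: "(S x)\<^sup>2 = (\<Sum>i\<in>I. \<Sum>k\<in>I. c (x i) * c (x k))" for x
    unfolding S_def power2_eq_square by (rule sum_product)
  have S2i: "integrable (PiM I (\<lambda>_. Q)) (\<lambda>x. (S x)\<^sup>2)"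
    unfolding S2 using cross by (intro Bochner_Integration.integrable_sum) auto
  have "integral\<^sup>L (PiM I (\<lambda>_. Q)) (\<lambda>x. (S x)\<^sup>2) = (\<Sum>i\<in>I. \<Sum>k\<in>I. integral\<^sup>L (PiM I (\<lambda>_. Q)) (\<lambda>x. c (x i) * c (x k)))"
    unfolding S2 using cross by (simp add: Bochner_Integration.integral_sum Bochner_Integration.integrable_sum)
  also have "\<dots> = (\<Sum>i\<in>I. \<Sum>k\<in>I. if i = k then integral\<^sup>L Q (\<lambda>p. (c p)\<^sup>2) else 0)"
    using cross by (intro sum.cong refl) auto
  also have "\<dots> = card I * integral\<^sup>L Q (\<lambda>p. (c p)\<^sup>2)"
    using fin by (simp add: sum.delta)
  finally have ES2: "integral\<^sup>L (PiM I (\<lambda>_. Q)) (\<lambda>x. (S x)\<^sup>2) = card I * integral\<^sup>L Q (\<lambda>p. (c p)\<^sup>2)" .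
  have Sm: "S \<in> borel_measurable (PiM I (\<lambda>_. Q))" unfolding S_def by measurable
  have Si: "integrable (PiM I (\<lambda>_. Q)) S" by (rule PI.square_integrable_imp_integrable[OF Sm S2i])
  have aSi: "integrable (PiM I (\<lambda>_. Q)) (\<lambda>x. \<bar>S x\<bar>)" using Si by auto
  have aS2i: "integrable (PiM I (\<lambda>_. Q)) (\<lambda>x. (\<bar>S x\<bar>)\<^sup>2)" using S2i by simp
  have "0 \<le> PI.variance (\<lambda>x. \<bar>S x\<bar>)" by (rule Bochner_Integration.integral_nonneg) auto
  then have "(integral\<^sup>L (PiM I (\<lambda>_. Q)) (\<lambda>x. \<bar>S x\<bar>))\<^sup>2 \<le> integral\<^sup>L (PiM I (\<lambda>_. Q)) (\<lambda>x. (S x)\<^sup>2)"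
    using PI.variance_eq[OF aSi aS2i] by simp
  then have le: "integral\<^sup>L (PiM I (\<lambda>_. Q)) (\<lambda>x. \<bar>S x\<bar>) \<le> sqrt (card I * integral\<^sup>L Q (\<lambda>p. (c p)\<^sup>2))"
    using ES2 by (intro real_le_rsqrt) simp
  have "(\<integral>\<^sup>+ xs. ennreal \<bar>S xs\<bar> \<partial>PiM I (\<lambda>_. Q)) = ennreal (integral\<^sup>L (PiM I (\<lambda>_. Q)) (\<lambda>x. \<bar>S x\<bar>))"
    by (rule nn_integral_eq_integral[OF aSi]) auto
  also have "\<dots> \<le> ennreal (sqrt (card I * integral\<^sup>L Q (\<lambda>p. (c p)\<^sup>2)))"
    using le by (rule ennreal_leI)
  finally show ?thesis unfolding S_def .
qed

lemma core_bound:
  fixes Y :: "'u measure" and P :: "('x \<times> 'y) measure" and SX :: "'x measure"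
    and h :: "'u \<Rightarrow> 'x \<Rightarrow> real" and F :: "'u \<times> (nat \<Rightarrow> 'x \<times> 'y) \<Rightarrow> real"
  assumes Y: "prob_space Y" and P: "prob_space P" and fstm[measurable]: "fst \<in> measurable P SX"
    and fin: "finite I" and c: "0 \<le> c"
    and hm[measurable]: "(\<lambda>(u, x). h u x) \<in> borel_measurable (Y \<Otimes>\<^sub>M SX)"
    and Fm[measurable]: "F \<in> borel_measurable (Y \<Otimes>\<^sub>M PiM I (\<lambda>_. P))"
    and AE: "AE u in Y. integrable (distr P SX fst) (\<lambda>x. (h u x)\<^sup>2) \<and>
       (\<forall>xs\<in>space (PiM I (\<lambda>_. P)). F (u, xs) = c * (\<Sum>i\<in>I. h u (fst (xs i)) - integral\<^sup>L (distr P SX fst) (h u)))"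
  shows "(\<integral>\<^sup>+ z. ennreal \<bar>F z\<bar> \<partial>(Y \<Otimes>\<^sub>M PiM I (\<lambda>_. P))) \<le>
    (\<integral>\<^sup>+ u. ennreal (c * sqrt (card I * (integral\<^sup>L (distr P SX fst) (\<lambda>x. (h u x)\<^sup>2) - (integral\<^sup>L (distr P SX fst) (h u))\<^sup>2))) \<partial>Y)"
proof -
  interpret Y: prob_space Y by fact
  interpret P: prob_space P by fact
  interpret PI: prob_space "PiM I (\<lambda>_. P)" by (rule prob_space_PiM) (rule P)
  let ?PX = "distr P SX fst"
  have "(\<integral>\<^sup>+ z. ennreal \<bar>F z\<bar> \<partial>(Y \<Otimes>\<^sub>M PiM I (\<lambda>_. P))) = (\<integral>\<^sup>+ u. \<integral>\<^sup>+ xs. ennreal \<bar>F (u, xs)\<bar> \<partial>PiM I (\<lambda>_. P) \<partial>Y)"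
    by (rule PI.nn_integral_fst[symmetric]) measurable
  also have "\<dots> \<le> (\<integral>\<^sup>+ u. ennreal (c * sqrt (card I * (integral\<^sup>L ?PX (\<lambda>x. (h u x)\<^sup>2) - (integral\<^sup>L ?PX (h u))\<^sup>2))) \<partial>Y)"
  proof (rule nn_integral_mono_AE)
    show "AE u in Y. (\<integral>\<^sup>+ xs. ennreal \<bar>F (u, xs)\<bar> \<partial>PiM I (\<lambda>_. P)) \<le> ennreal (c * sqrt (card I * (integral\<^sup>L ?PX (\<lambda>x. (h u x)\<^sup>2) - (integral\<^sup>L ?PX (h u))\<^sup>2)))"
      using AE AE_space[of Y]
    proof eventually_elim
      case (elim u)
      then have u: "u \<in> space Y" and h2: "integrable ?PX (\<lambda>x. (h u x)\<^sup>2)"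
        and Feq: "\<And>xs. xs \<in> space (PiM I (\<lambda>_. P)) \<Longrightarrow> F (u, xs) = c * (\<Sum>i\<in>I. h u (fst (xs i)) - integral\<^sup>L ?PX (h u))"
        by auto
      have hum[measurable]: "h u \<in> borel_measurable SX" using u by measurable
      interpret PX: prob_space ?PX by (rule P.prob_space_distr) (rule fstm)
      have hi: "integrable ?PX (h u)" by (rule PX.square_integrable_imp_integrable[OF _ h2]) simp
      define \<mu> where "\<mu> = integral\<^sup>L ?PX (h u)"
      define g :: "'x \<times> 'y \<Rightarrow> real" where "g = (\<lambda>p. h u (fst p) - \<mu>)"
      have gm[measurable]: "g \<in> borel_measurable P" unfolding g_def by measurable
      have hP: "integrable P (\<lambda>p. h u (fst p))" using hi by (simp add: integrable_distr_eq)
      have h2P: "integrable P (\<lambda>p. (h u (fst p))\<^sup>2)" using h2 by (simp add: integrable_distr_eq)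
      have g2: "integrable P (\<lambda>p. (g p)\<^sup>2)"
        unfolding g_def power2_diff using hP h2P by (intro Bochner_Integration.integrable_diff Bochner_Integration.integrable_add) auto
      have g0: "integral\<^sup>L P g = 0"
        unfolding g_def using hP by (simp add: integral_distr[symmetric] \<mu>_def P.prob_space)
      have "integral\<^sup>L P (\<lambda>p. (g p)\<^sup>2) = integral\<^sup>L P (\<lambda>p. (h u (fst p))\<^sup>2) - 2 * \<mu> * integral\<^sup>L P (\<lambda>p. h u (fst p)) + \<mu>\<^sup>2"
        unfolding g_def power2_diff using hP h2P by (simp add: P.prob_space)
      also have "\<dots> = integral\<^sup>L ?PX (\<lambda>x. (h u x)\<^sup>2) - \<mu>\<^sup>2"
        by (simp add: integral_distr \<mu>_def power2_eq_square)
      finally have g2eq: "integral\<^sup>L P (\<lambda>p. (g p)\<^sup>2) = integral\<^sup>L ?PX (\<lambda>x. (h u x)\<^sup>2) - \<mu>\<^sup>2" .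
      have "(\<integral>\<^sup>+ xs. ennreal \<bar>F (u, xs)\<bar> \<partial>PiM I (\<lambda>_. P)) = (\<integral>\<^sup>+ xs. ennreal c * ennreal \<bar>\<Sum>i\<in>I. g (xs i)\<bar> \<partial>PiM I (\<lambda>_. P))"
        using c by (intro nn_integral_cong) (simp add: Feq g_def \<mu>_def abs_mult ennreal_mult sum_subtractf)
      also have "\<dots> = ennreal c * (\<integral>\<^sup>+ xs. ennreal \<bar>\<Sum>i\<in>I. g (xs i)\<bar> \<partial>PiM I (\<lambda>_. P))"
        by (rule nn_integral_cmult) measurable
      also have "\<dots> \<le> ennreal c * ennreal (sqrt (card I * integral\<^sup>L P (\<lambda>p. (g p)\<^sup>2)))"
        by (intro mult_left_mono inner_bound[OF P fin gm g2 g0]) simp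
      also have "\<dots> = ennreal (c * sqrt (card I * (integral\<^sup>L ?PX (\<lambda>x. (h u x)\<^sup>2) - (integral\<^sup>L ?PX (h u))\<^sup>2)))"
        using c by (simp add: ennreal_mult' g2eq \<mu>_def)
      finally show ?case .
    qed
  qed
  finally show ?thesis .
qed

lemma joint_law:
  fixes M :: "'w measure" and P :: "'p measure" and R :: "'r measure"
  assumes M: "prob_space M" and n: "0 < n" and K: "0 < K"
    and Z_meas: "\<And>i. i < n \<Longrightarrow> Z i \<in> measurable M P"
    and Z_distr: "\<And>i. i < n \<Longrightarrow> distr M P (Z i) = P"
    and Z_indep: "prob_space.indep_vars M (\<lambda>_. P) Z {..<n}"
    and xi_meas: "\<And>j. j < K \<Longrightarrow> xi j \<in> measurable M R"
    and xi_distr: "\<And>j. j < K \<Longrightarrow> distr M R (xi j) = R"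
    and xi_indep: "prob_space.indep_vars M (\<lambda>_. R) xi {..<K}"
    and dxi: "\<And>B C. B \<in> sets (PiM {..<n} (\<lambda>_. P)) \<Longrightarrow>
          C \<in> sets (PiM {..<K} (\<lambda>_. R)) \<Longrightarrow>
          measure M {w \<in> space M. (\<lambda>i\<in>{..<n}. Z i w) \<in> B \<and> (\<lambda>j\<in>{..<K}. xi j w) \<in> C}
          = measure M {w \<in> space M. (\<lambda>i\<in>{..<n}. Z i w) \<in> B}
            * measure M {w \<in> space M. (\<lambda>j\<in>{..<K}. xi j w) \<in> C}"
  shows "distr M (PiM {..<n} (\<lambda>_. P) \<Otimes>\<^sub>M PiM {..<K} (\<lambda>_. R))
      (\<lambda>w. (\<lambda>i\<in>{..<n}. Z i w, \<lambda>j\<in>{..<K}. xi j w)) = PiM {..<n} (\<lambda>_. P) \<Otimes>\<^sub>M PiM {..<K} (\<lambda>_. R)"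
    and "prob_space P" and "prob_space R"
proof -
  interpret M: prob_space M by fact
  show P: "prob_space P" using M.prob_space_distr[OF Z_meas[OF n]] Z_distr[OF n] by simp
  show R: "prob_space R" using M.prob_space_distr[OF xi_meas[OF K]] xi_distr[OF K] by simp
  interpret PZ: prob_space "PiM {..<n} (\<lambda>_. P)" by (rule prob_space_PiM) (rule P)
  interpret PK: prob_space "PiM {..<K} (\<lambda>_. R)" by (rule prob_space_PiM) (rule R)
  have Zm: "(\<lambda>w. \<lambda>i\<in>{..<n}. Z i w) \<in> measurable M (PiM {..<n} (\<lambda>_. P))"
    using Z_meas by (intro measurable_restrict) auto
  have xm: "(\<lambda>w. \<lambda>j\<in>{..<K}. xi j w) \<in> measurable M (PiM {..<K} (\<lambda>_. R))"
    using xi_meas by (intro measurable_restrict) auto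
  have Zd: "distr M (PiM {..<n} (\<lambda>_. P)) (\<lambda>w. \<lambda>i\<in>{..<n}. Z i w) = PiM {..<n} (\<lambda>_. P)"
  proof -
    have "distr M (PiM {..<n} (\<lambda>_. P)) (\<lambda>w. \<lambda>i\<in>{..<n}. Z i w) = PiM {..<n} (\<lambda>i. distr M P (Z i))"
      by (rule M.indep_vars_iff_distr_eq_PiM'[of "{..<n}" Z "\<lambda>_. P", THEN iffD1, OF _ _ Z_indep]) (use n Z_meas in auto)
    also have "\<dots> = PiM {..<n} (\<lambda>_. P)" using Z_distr by (intro PiM_cong) auto
    finally show ?thesis .
  qed
  have xd: "distr M (PiM {..<K} (\<lambda>_. R)) (\<lambda>w. \<lambda>j\<in>{..<K}. xi j w) = PiM {..<K} (\<lambda>_. R)"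
  proof -
    have "distr M (PiM {..<K} (\<lambda>_. R)) (\<lambda>w. \<lambda>i\<in>{..<K}. xi i w) = PiM {..<K} (\<lambda>i. distr M R (xi i))"
      by (rule M.indep_vars_iff_distr_eq_PiM'[of "{..<K}" xi "\<lambda>_. R", THEN iffD1, OF _ _ xi_indep]) (use K xi_meas in auto)
    also have "\<dots> = PiM {..<K} (\<lambda>_. R)" using xi_distr by (intro PiM_cong) auto
    finally show ?thesis .
  qed
  show "distr M (PiM {..<n} (\<lambda>_. P) \<Otimes>\<^sub>M PiM {..<K} (\<lambda>_. R))
      (\<lambda>w. (\<lambda>i\<in>{..<n}. Z i w, \<lambda>j\<in>{..<K}. xi j w)) = PiM {..<n} (\<lambda>_. P) \<Otimes>\<^sub>M PiM {..<K} (\<lambda>_. R)"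
  proof (rule pair_measure_eqI[symmetric])
    show "sigma_finite_measure (PiM {..<n} (\<lambda>_. P))" "sigma_finite_measure (PiM {..<K} (\<lambda>_. R))"
      by (rule PZ.sigma_finite_measure, rule PK.sigma_finite_measure)
    show "sets (PiM {..<n} (\<lambda>_. P) \<Otimes>\<^sub>M PiM {..<K} (\<lambda>_. R)) = sets (distr M (PiM {..<n} (\<lambda>_. P) \<Otimes>\<^sub>M PiM {..<K} (\<lambda>_. R))
      (\<lambda>w. (\<lambda>i\<in>{..<n}. Z i w, \<lambda>j\<in>{..<K}. xi j w)))" by simp
    fix B C assume B: "B \<in> sets (PiM {..<n} (\<lambda>_. P))" and C: "C \<in> sets (PiM {..<K} (\<lambda>_. R))"
    have pm: "(\<lambda>w. (\<lambda>i\<in>{..<n}. Z i w, \<lambda>j\<in>{..<K}. xi j w)) \<in> measurable M (PiM {..<n} (\<lambda>_. P) \<Otimes>\<^sub>M PiM {..<K} (\<lambda>_. R))"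
      using Zm xm by (rule measurable_Pair)
    have e1: "emeasure (PiM {..<n} (\<lambda>_. P)) B = ennreal (measure M {w \<in> space M. (\<lambda>i\<in>{..<n}. Z i w) \<in> B})"
      by (subst Zd[symmetric]) (simp add: emeasure_distr[OF Zm B] M.emeasure_eq_measure vimage_def Int_def conj_commute)
    have e2: "emeasure (PiM {..<K} (\<lambda>_. R)) C = ennreal (measure M {w \<in> space M. (\<lambda>j\<in>{..<K}. xi j w) \<in> C})"
      by (subst xd[symmetric]) (simp add: emeasure_distr[OF xm C] M.emeasure_eq_measure vimage_def Int_def conj_commute)
    have e3: "emeasure (distr M (PiM {..<n} (\<lambda>_. P) \<Otimes>\<^sub>M PiM {..<K} (\<lambda>_. R))
      (\<lambda>w. (\<lambda>i\<in>{..<n}. Z i w, \<lambda>j\<in>{..<K}. xi j w))) (B \<times> C)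
      = ennreal (measure M {w \<in> space M. (\<lambda>i\<in>{..<n}. Z i w) \<in> B \<and> (\<lambda>j\<in>{..<K}. xi j w) \<in> C})"
      using B C by (simp add: emeasure_distr[OF pm] M.emeasure_eq_measure vimage_def Int_def conj_commute)
    show "emeasure (PiM {..<n} (\<lambda>_. P)) B * emeasure (PiM {..<K} (\<lambda>_. R)) C = emeasure (distr M (PiM {..<n} (\<lambda>_. P) \<Otimes>\<^sub>M PiM {..<K} (\<lambda>_. R))
      (\<lambda>w. (\<lambda>i\<in>{..<n}. Z i w, \<lambda>j\<in>{..<K}. xi j w))) (B \<times> C)"
      unfolding e1 e2 e3 dxi[OF B C] by (simp add: ennreal_mult)
  qed
qed

lemma sq_bound:
  fixes a b e :: "'d::euclidean_space"
  assumes e: "e \<in> Basis"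
  shows "((a - b) \<bullet> e)\<^sup>2 \<le> 2 * (norm a)\<^sup>2 + 2 * (norm b)\<^sup>2"
proof -
  have "\<bar>(a - b) \<bullet> e\<bar> \<le> norm (a - b)" using Basis_le_norm[OF e] .
  also have "\<dots> \<le> norm a + norm b" by (rule norm_triangle_ineq4)
  finally have "((a - b) \<bullet> e)\<^sup>2 \<le> (norm a + norm b)\<^sup>2"
    by (metis abs_ge_zero power2_abs power_mono)
  also have "\<dots> \<le> 2 * (norm a)\<^sup>2 + 2 * (norm b)\<^sup>2"
    by (simp add: power2_sum) (metis add.commute mult_2 sum_squares_bound power2_eq_square)
  finally show ?thesis .
qed

lemma per_m:
  fixes G :: "'x \<Rightarrow> 'y::euclidean_space \<Rightarrow> 'd::euclidean_space"
    and SX :: "'x measure" and P :: "('x \<times> 'y) measure" and M :: "'w measure" and n K :: nat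
    and Z :: "nat \<Rightarrow> 'w \<Rightarrow> 'x \<times> 'y" and R :: "'r measure" and xi :: "nat \<Rightarrow> 'w \<Rightarrow> 'r"
    and A :: "(nat \<Rightarrow> 'x \<times> 'y) \<Rightarrow> 'r \<Rightarrow> 'x \<Rightarrow> 'y" and \<epsilon> :: real
  defines "PX \<equiv> distr P SX fst"
    and "f \<equiv> fitted A n (n div K) Z xi"
  assumes P_sets: "sets P = sets (SX \<Otimes>\<^sub>M (borel :: 'y measure))"
    and G_meas: "(\<lambda>(x, y). G x y) \<in> borel_measurable (SX \<Otimes>\<^sub>M (borel :: 'y measure))"
    and M_prob: "prob_space M"
    and K_pos: "0 < K" and K_dvd: "K dvd n" and n_pos: "0 < n"
    and Z_meas: "\<And>i. i < n \<Longrightarrow> Z i \<in> measurable M P"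
    and Z_distr: "\<And>i. i < n \<Longrightarrow> distr M P (Z i) = P"
    and Z_indep: "prob_space.indep_vars M (\<lambda>_. P) Z {..<n}"
    and xi_meas: "\<And>j. j < K \<Longrightarrow> xi j \<in> measurable M R"
    and xi_distr: "\<And>j. j < K \<Longrightarrow> distr M R (xi j) = R"
    and xi_indep: "prob_space.indep_vars M (\<lambda>_. R) xi {..<K}"
    and data_xi_indep: "\<And>B C. B \<in> sets (PiM {..<n} (\<lambda>_. P)) \<Longrightarrow>
          C \<in> sets (PiM {..<K} (\<lambda>_. R)) \<Longrightarrow>
          measure M {w \<in> space M. (\<lambda>i\<in>{..<n}. Z i w) \<in> B \<and> (\<lambda>j\<in>{..<K}. xi j w) \<in> C}
          = measure M {w \<in> space M. (\<lambda>i\<in>{..<n}. Z i w) \<in> B}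
            * measure M {w \<in> space M. (\<lambda>j\<in>{..<K}. xi j w) \<in> C}"
    and A_meas: "(\<lambda>((d, r), x). A d r x) \<in> borel_measurable
          ((PiM {..< n - n div K} (\<lambda>_. P) \<Otimes>\<^sub>M R) \<Otimes>\<^sub>M SX)"
    and G_f_L2: "integrable (M \<Otimes>\<^sub>M PX) (\<lambda>(w, x). (norm (G x (f 0 w x)))\<^sup>2)"
    and G_fbar_L2: "integrable PX (\<lambda>x. (norm (G x (fbar M (f 0) x)))\<^sup>2)"
    and stab_int: "\<And>e. e \<in> Basis \<Longrightarrow> integrable M
          (\<lambda>w. sqrt (real K * cond_var_coord PX G (f 0 w) (fbar M (f 0)) e))"
    and eps: "0 < \<epsilon>"
  shows "measure M {w \<in> space M.
            norm (\<Sum>j<K. L_fold n (fold_block (n div K) j) PX G (f j w)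
                               (fbar M (f 0)) (\<lambda>i. fst (Z i w))) > \<epsilon>}
     \<le> (\<Sum>e\<in>Basis. \<integral>w. sqrt (real K * cond_var_coord PX G (f 0 w) (fbar M (f 0)) e) \<partial>M) / \<epsilon>"
proof -
  interpret M: prob_space M by fact
  have P: "prob_space P" and R: "prob_space R"
    and law: "distr M (PiM {..<n} (\<lambda>_. P) \<Otimes>\<^sub>M PiM {..<K} (\<lambda>_. R))
      (\<lambda>w. (\<lambda>i\<in>{..<n}. Z i w, \<lambda>j\<in>{..<K}. xi j w)) = PiM {..<n} (\<lambda>_. P) \<Otimes>\<^sub>M PiM {..<K} (\<lambda>_. R)"
    using joint_law[of M n K Z P xi R, OF M_prob n_pos K_pos Z_meas Z_distr Z_indep xi_meas xi_distr xi_indep data_xi_indep] by blast+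
  interpret P: prob_space P by fact
  interpret R: prob_space R by fact
  define b where "b = n div K"
  have bK: "b * K = n" using K_dvd unfolding b_def by simp
  define Y where "Y = PiM {..<n-b} (\<lambda>_. P) \<Otimes>\<^sub>M R"
  interpret Y: prob_space Y unfolding Y_def
    by (intro prob_space_pair prob_space_PiM P R)
  interpret PXp: prob_space PX unfolding PX_def
    by (rule P.prob_space_distr) (simp add: measurable_cong_sets[OF P_sets refl])
  have fstm[measurable]: "fst \<in> measurable P SX" by (simp add: measurable_cong_sets[OF P_sets refl])
  have sPX: "sets PX = sets SX" unfolding PX_def by simp
  define T where "T = (\<lambda>j w. (train_data n b j Z w, xi j w))"
  define A' where "A' = (\<lambda>(u :: (nat \<Rightarrow> 'x \<times> 'y) \<times> 'r) x. A (fst u) (snd u) x)"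
  have fT: "f j w = A' (T j w)" for j w
    unfolding f_def fitted_def A'_def T_def b_def by simp
  have Tm: "T j \<in> measurable M Y" if j: "j < K" for j
  proof -
    have "(\<lambda>w. train_data n b j Z w) \<in> measurable M (PiM {..<n-b} (\<lambda>_. P))"
      unfolding train_data_def using train_idx_props(1)[OF bK j] Z_meas
      by (intro measurable_restrict) auto
    then show ?thesis unfolding T_def Y_def using xi_meas[OF j] by (intro measurable_Pair)
  qed
  have A'm[measurable]: "(\<lambda>(u, x). A' u x) \<in> borel_measurable (Y \<Otimes>\<^sub>M SX)"
  proof -
    have "(\<lambda>(u, x). A' u x) = (\<lambda>((d, r), x). A d r x)" by (auto simp: A'_def fun_eq_iff)
    then show ?thesis using A_meas unfolding Y_def b_def by simp
  qed
  have Gm[measurable]: "(\<lambda>(x, y). G x y) \<in> borel_measurable (SX \<Otimes>\<^sub>M (borel :: 'y measure))" by (rule G_meas)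
  have GAm[measurable]: "(\<lambda>(u, x). G x (A' u x)) \<in> borel_measurable (Y \<Otimes>\<^sub>M SX)"
  proof -
    have "(\<lambda>z. (snd z, (\<lambda>(u, x). A' u x) z)) \<in> measurable (Y \<Otimes>\<^sub>M SX) (SX \<Otimes>\<^sub>M (borel :: 'y measure))"
      by measurable
    from measurable_comp[OF this Gm] show ?thesis by (simp add: comp_def split_beta')
  qed
  have Dj: "distr M (Y \<Otimes>\<^sub>M PiM (fold_block b j) (\<lambda>_. P)) (\<lambda>w. (T j w, restrict (\<lambda>i. Z i w) (fold_block b j)))
      = Y \<Otimes>\<^sub>M PiM (fold_block b j) (\<lambda>_. P)" if j: "j < K" for j
  proof -
    let ?\<Omega> = "PiM {..<n} (\<lambda>_. P) \<Otimes>\<^sub>M PiM {..<K} (\<lambda>_. R)"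
    let ?W = "\<lambda>w. (\<lambda>i\<in>{..<n}. Z i w, \<lambda>j\<in>{..<K}. xi j w)"
    let ?\<psi> = "\<lambda>(z, r). ((\<lambda>k\<in>{..<n-b}. z (train_idx b j k), r j), restrict z (fold_block b j))"
    have Wm: "?W \<in> measurable M ?\<Omega>"
      using Z_meas xi_meas by (intro measurable_Pair measurable_restrict) auto
    have Ifb: "fold_block b j \<subseteq> {..<n}"
    proof -
      have "(j + 1) * b \<le> n" using bK j by (metis Suc_eq_plus1 Suc_leI mult.commute mult_le_mono2)
      then show ?thesis unfolding fold_block_def by auto
    qed
    have "distr M (Y \<Otimes>\<^sub>M PiM (fold_block b j) (\<lambda>_. P)) (\<lambda>w. (T j w, restrict (\<lambda>i. Z i w) (fold_block b j)))
        = distr M (Y \<Otimes>\<^sub>M PiM (fold_block b j) (\<lambda>_. P)) (?\<psi> \<circ> ?W)"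
    proof (rule distr_cong)
      fix w assume "w \<in> space M"
      show "(T j w, restrict (\<lambda>i. Z i w) (fold_block b j)) = (?\<psi> \<circ> ?W) w"
        using train_idx_props(1)[OF bK j] j Ifb
        by (auto simp: T_def train_data_def restrict_def fun_eq_iff)
    qed auto
    also have "\<dots> = distr (distr M ?\<Omega> ?W) (Y \<Otimes>\<^sub>M PiM (fold_block b j) (\<lambda>_. P)) ?\<psi>"
      using distr_fold_split(2)[OF P R bK j] Wm unfolding Y_def by (intro distr_distr[symmetric])
    also have "\<dots> = Y \<Otimes>\<^sub>M PiM (fold_block b j) (\<lambda>_. P)"
      unfolding law using distr_fold_split(1)[OF P R bK j] unfolding Y_def .
    finally show ?thesis .
  qed
  have DY: "distr M Y (T j) = Y" if j: "j < K" for j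
  proof -
    interpret PI: prob_space "PiM (fold_block b j) (\<lambda>_. P)" by (rule prob_space_PiM) (rule P)
    have Phim: "(\<lambda>w. (T j w, restrict (\<lambda>i. Z i w) (fold_block b j))) \<in> measurable M (Y \<Otimes>\<^sub>M PiM (fold_block b j) (\<lambda>_. P))"
    proof (rule measurable_Pair)
      show "T j \<in> measurable M Y" by (rule Tm[OF j])
      have "fold_block b j \<subseteq> {..<n}"
      proof -
        have "(j + 1) * b \<le> n" using bK j by (metis Suc_eq_plus1 Suc_leI mult.commute mult_le_mono2)
        then show ?thesis unfolding fold_block_def by auto
      qed
      then show "(\<lambda>w. restrict (\<lambda>i. Z i w) (fold_block b j)) \<in> measurable M (PiM (fold_block b j) (\<lambda>_. P))"
        using Z_meas by (intro measurable_restrict) auto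
    qed
    have "distr M Y (T j) = distr (distr M (Y \<Otimes>\<^sub>M PiM (fold_block b j) (\<lambda>_. P)) (\<lambda>w. (T j w, restrict (\<lambda>i. Z i w) (fold_block b j)))) Y fst"
      using Phim by (subst distr_distr) (auto simp: comp_def)
    also have "\<dots> = Y" unfolding Dj[OF j] by (rule PI.distr_pair_fst)
    finally show ?thesis .
  qed
  have T0m[measurable]: "T 0 \<in> measurable M Y" using Tm K_pos by simp
  define fb where "fb = fbar M (f 0)"
  have fbm[measurable]: "fb \<in> borel_measurable SX"
  proof -
    have "(\<lambda>(x, w). A' (T 0 w) x) \<in> borel_measurable (SX \<Otimes>\<^sub>M M)"
    proof -
      have "(\<lambda>z. (T 0 (snd z), fst z)) \<in> measurable (SX \<Otimes>\<^sub>M M) (Y \<Otimes>\<^sub>M SX)" by measurable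
      from measurable_comp[OF this A'm] show ?thesis by (simp add: comp_def split_beta')
    qed
    then have "(\<lambda>x. \<integral>w. A' (T 0 w) x \<partial>M) \<in> borel_measurable SX"
      by (rule M.borel_measurable_lebesgue_integral)
    then show ?thesis unfolding fb_def fbar_def fT .
  qed
  have Gbm[measurable]: "(\<lambda>x. G x (fb x)) \<in> borel_measurable SX"
  proof -
    have "(\<lambda>x. (x, fb x)) \<in> measurable SX (SX \<Otimes>\<^sub>M (borel :: 'y measure))" by measurable
    from measurable_comp[OF this Gm] show ?thesis by (simp add: comp_def)
  qed
  have GAm'[measurable]: "(\<lambda>(u, x). G x (A' u x)) \<in> borel_measurable (Y \<Otimes>\<^sub>M PX)"
    using GAm by (simp add: measurable_cong_sets[OF sets_pair_measure_cong[OF refl sPX] refl])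
  interpret YPX: pair_prob_space Y PX ..
  have AEf: "AE u in Y. integrable PX (\<lambda>x. (norm (G x (A' u x)))\<^sup>2)"
  proof -
    have dd: "distr (M \<Otimes>\<^sub>M PX) (Y \<Otimes>\<^sub>M PX) (\<lambda>(w, x). (T 0 w, x)) = Y \<Otimes>\<^sub>M PX"
      using pair_measure_distr[OF T0m measurable_ident[of PX]] DY[OF K_pos]
      by (simp add: id_def PXp.sigma_finite_measure)
    have pm: "(\<lambda>(w, x). (T 0 w, x)) \<in> measurable (M \<Otimes>\<^sub>M PX) (Y \<Otimes>\<^sub>M PX)" by measurable
    have gm: "(\<lambda>(u, x). (norm (G x (A' u x)))\<^sup>2) \<in> borel_measurable (Y \<Otimes>\<^sub>M PX)" by measurable
    have "integrable (M \<Otimes>\<^sub>M PX) (\<lambda>z. (\<lambda>(u, x). (norm (G x (A' u x)))\<^sup>2) ((\<lambda>(w, x). (T 0 w, x)) z))"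
      using G_f_L2 by (simp add: fT split_beta')
    then have "integrable (Y \<Otimes>\<^sub>M PX) (\<lambda>(u, x). (norm (G x (A' u x)))\<^sup>2)"
      using integrable_distr_eq[OF pm gm] dd by simp
    from YPX.AE_integrable_fst'[OF this] show ?thesis by simp
  qed
  have Gbm'[measurable]: "(\<lambda>x. G x (fb x)) \<in> borel_measurable PX"
    using Gbm by (simp add: measurable_cong_sets[OF sPX refl])
  have Gb2: "integrable PX (\<lambda>x. (norm (G x (fb x)))\<^sup>2)" using G_fbar_L2 unfolding fb_def .
  have Gbi: "integrable PX (\<lambda>x. G x (fb x))"
    using PXp.square_integrable_imp_integrable[OF _ Gb2] by (simp add: integrable_norm_iff)
  have good: "AE u in Y. integrable PX (\<lambda>x. G x (A' u x)) \<and>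
      (\<forall>e\<in>Basis. integrable PX (\<lambda>x. ((G x (A' u x) - G x (fb x)) \<bullet> e)\<^sup>2) \<and> 0 \<le> cond_var_coord PX G (A' u) fb e)"
    using AEf AE_space[of Y]
  proof eventually_elim
    case (elim u)
    then have u: "u \<in> space Y" and f2: "integrable PX (\<lambda>x. (norm (G x (A' u x)))\<^sup>2)" by auto
    have Gum[measurable]: "(\<lambda>x. G x (A' u x)) \<in> borel_measurable PX" using u by measurable
    have Gui: "integrable PX (\<lambda>x. G x (A' u x))"
      using PXp.square_integrable_imp_integrable[OF _ f2] by (simp add: integrable_norm_iff)
    have h2: "integrable PX (\<lambda>x. ((G x (A' u x) - G x (fb x)) \<bullet> e)\<^sup>2)" if e: "e \<in> Basis" for e
      by (rule Bochner_Integration.integrable_bound[where f="\<lambda>x. 2 * (norm (G x (A' u x)))\<^sup>2 + 2 * (norm (G x (fb x)))\<^sup>2"])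
         (use f2 Gb2 sq_bound[OF e] in auto)
    have vn: "0 \<le> cond_var_coord PX G (A' u) fb e" if e: "e \<in> Basis" for e
    proof -
      let ?h = "\<lambda>x. (G x (A' u x) - G x (fb x)) \<bullet> e"
      have hi: "integrable PX ?h" using Gui Gbi by auto
      have "0 \<le> PXp.variance ?h" by (rule Bochner_Integration.integral_nonneg) auto
      then show ?thesis using PXp.variance_eq[OF hi h2[OF e]] by (simp add: cond_var_coord_def)
    qed
    show ?case using Gui h2 vn by auto
  qed
  define V where "V = (\<lambda>e u. cond_var_coord PX G (A' u) fb e)"
  define Lw where "Lw = (\<lambda>j w. L_fold n (fold_block b j) PX G (f j w) fb (\<lambda>i. fst (Z i w)))"
  define F where "F = (\<lambda>j e (z :: ((nat \<Rightarrow> 'x \<times> 'y) \<times> 'r) \<times> (nat \<Rightarrow> 'x \<times> 'y)).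
     L_fold n (fold_block b j) PX G (A' (fst z)) fb (\<lambda>i. fst (snd z i)) \<bullet> e)"
  have intm[measurable]: "(\<lambda>u. \<integral>x. G x (A' u x) \<partial>PX) \<in> borel_measurable Y"
    using PXp.borel_measurable_lebesgue_integral[OF GAm'] by simp
  have Fm: "F j e \<in> borel_measurable (Y \<Otimes>\<^sub>M PiM (fold_block b j) (\<lambda>_. P))" for j e
  proof -
    have c1: "(\<lambda>z. G (fst (snd z i)) (A' (fst z) (fst (snd z i)))) \<in> borel_measurable (Y \<Otimes>\<^sub>M PiM (fold_block b j) (\<lambda>_. P))"
      if i: "i \<in> fold_block b j" for i
    proof -
      have "(\<lambda>z. (fst z, fst (snd z i))) \<in> measurable (Y \<Otimes>\<^sub>M PiM (fold_block b j) (\<lambda>_. P)) (Y \<Otimes>\<^sub>M SX)"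
        using i by measurable
      from measurable_comp[OF this GAm] show ?thesis by (simp add: comp_def)
    qed
    have c2: "(\<lambda>z. G (fst (snd z i)) (fb (fst (snd z i)))) \<in> borel_measurable (Y \<Otimes>\<^sub>M PiM (fold_block b j) (\<lambda>_. P))"
      if i: "i \<in> fold_block b j" for i
      using i by measurable
    show ?thesis unfolding F_def L_fold_def using c1 c2
      by (intro borel_measurable_inner borel_measurable_scaleR borel_measurable_sum
           borel_measurable_diff measurable_const measurable_compose[OF measurable_fst intm]) auto
  qed
  have LF: "Lw j w \<bullet> e = F j e (T j w, restrict (\<lambda>i. Z i w) (fold_block b j))" for j e w
    unfolding Lw_def F_def L_fold_def fT by (simp cong: sum.cong)
  have card_fb: "card (fold_block b j) = b" for j unfolding fold_block_def by simp
  have b_pos: "0 < b" using bK n_pos by (metis gr0I mult_is_0)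
  have bound_je: "(\<integral>\<^sup>+ z. ennreal \<bar>F j e z\<bar> \<partial>(Y \<Otimes>\<^sub>M PiM (fold_block b j) (\<lambda>_. P)))
      \<le> (\<integral>\<^sup>+ u. ennreal (sqrt (V e u / K)) \<partial>Y)" if j: "j < K" and e: "e \<in> Basis" for j e
  proof -
    define h where "h = (\<lambda>u x. (G x (A' u x) - G x (fb x)) \<bullet> e)"
    have hm: "(\<lambda>(u, x). h u x) \<in> borel_measurable (Y \<Otimes>\<^sub>M SX)" unfolding h_def by measurable
    have AEc: "AE u in Y. integrable (distr P SX fst) (\<lambda>x. (h u x)\<^sup>2) \<and>
       (\<forall>xs\<in>space (PiM (fold_block b j) (\<lambda>_. P)). F j e (u, xs) = (1 / sqrt n) * (\<Sum>i\<in>fold_block b j. h u (fst (xs i)) - integral\<^sup>L (distr P SX fst) (h u)))"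
      using good
    proof eventually_elim
      case (elim u)
      then have Gui: "integrable PX (\<lambda>x. G x (A' u x))"
        and h2: "integrable PX (\<lambda>x. (h u x)\<^sup>2)" using e by (auto simp: h_def)
      have ih: "(\<integral>x. G x (A' u x) \<bullet> e - G x (fb x) \<bullet> e \<partial>PX) = (\<integral>x. G x (A' u x) \<partial>PX) \<bullet> e - (\<integral>x. G x (fb x) \<partial>PX) \<bullet> e"
        using Gui Gbi by (subst Bochner_Integration.integral_diff) auto
      show ?case using h2 unfolding PX_def[symmetric]
        by (auto simp: F_def L_fold_def ih inner_sum_left inner_diff_left h_def algebra_simps)
    qed
    have "(\<integral>\<^sup>+ z. ennreal \<bar>F j e z\<bar> \<partial>(Y \<Otimes>\<^sub>M PiM (fold_block b j) (\<lambda>_. P)))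
      \<le> (\<integral>\<^sup>+ u. ennreal ((1 / sqrt n) * sqrt (card (fold_block b j) * (integral\<^sup>L (distr P SX fst) (\<lambda>x. (h u x)\<^sup>2) - (integral\<^sup>L (distr P SX fst) (h u))\<^sup>2))) \<partial>Y)"
      by (rule core_bound[OF Y.prob_space_axioms P fstm _ _ hm Fm AEc]) (auto simp: fold_block_def)
    also have "\<dots> = (\<integral>\<^sup>+ u. ennreal (sqrt (V e u / K)) \<partial>Y)"
    proof (intro nn_integral_cong arg_cong[where f=ennreal])
      fix u
      have "(1 / sqrt n) * sqrt (card (fold_block b j) * (integral\<^sup>L (distr P SX fst) (\<lambda>x. (h u x)\<^sup>2) - (integral\<^sup>L (distr P SX fst) (h u))\<^sup>2))
          = sqrt (b * V e u / n)"
        by (simp add: card_fb V_def cond_var_coord_def h_def PX_def real_sqrt_divide)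
      also have "\<dots> = sqrt (V e u / K)"
        using b_pos bK[symmetric] by (simp add: field_simps)
      finally show "(1 / sqrt n) * sqrt (card (fold_block b j) * (integral\<^sup>L (distr P SX fst) (\<lambda>x. (h u x)\<^sup>2) - (integral\<^sup>L (distr P SX fst) (h u))\<^sup>2))
          = sqrt (V e u / K)" .
    qed
    finally show ?thesis .
  qed
  have Phim: "(\<lambda>w. (T j w, restrict (\<lambda>i. Z i w) (fold_block b j))) \<in> measurable M (Y \<Otimes>\<^sub>M PiM (fold_block b j) (\<lambda>_. P))"
    if j: "j < K" for j
  proof (rule measurable_Pair)
    show "T j \<in> measurable M Y" by (rule Tm[OF j])
    have "fold_block b j \<subseteq> {..<n}"
    proof -
      have "(j + 1) * b \<le> n" using bK j by (metis Suc_eq_plus1 Suc_leI mult.commute mult_le_mono2)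
      then show ?thesis unfolding fold_block_def by auto
    qed
    then show "(\<lambda>w. restrict (\<lambda>i. Z i w) (fold_block b j)) \<in> measurable M (PiM (fold_block b j) (\<lambda>_. P))"
      using Z_meas by (intro measurable_restrict) auto
  qed
  have Lm: "(\<lambda>w. Lw j w \<bullet> e) \<in> borel_measurable M" if j: "j < K" for j e
    unfolding LF using measurable_comp[OF Phim[OF j] Fm[of j e]] by (simp add: comp_def)
  have Vm: "V e \<in> borel_measurable Y" for e
  proof -
    have "(\<lambda>(u, x). ((G x (A' u x) - G x (fb x)) \<bullet> e)\<^sup>2) \<in> borel_measurable (Y \<Otimes>\<^sub>M PX)" by measurable
    from PXp.borel_measurable_lebesgue_integral[OF this]
    have 1: "(\<lambda>u. \<integral>x. ((G x (A' u x) - G x (fb x)) \<bullet> e)\<^sup>2 \<partial>PX) \<in> borel_measurable Y" by simp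
    have "(\<lambda>(u, x). (G x (A' u x) - G x (fb x)) \<bullet> e) \<in> borel_measurable (Y \<Otimes>\<^sub>M PX)" by measurable
    from PXp.borel_measurable_lebesgue_integral[OF this]
    have 2: "(\<lambda>u. \<integral>x. (G x (A' u x) - G x (fb x)) \<bullet> e \<partial>PX) \<in> borel_measurable Y" by simp
    show ?thesis unfolding V_def cond_var_coord_def using 1 2 by measurable
  qed
  have each: "(\<integral>\<^sup>+ w. ennreal \<bar>Lw j w \<bullet> e\<bar> \<partial>M) \<le> (\<integral>\<^sup>+ u. ennreal (sqrt (V e u / K)) \<partial>Y)"
    if j: "j < K" and e: "e \<in> Basis" for j e
  proof -
    have "(\<integral>\<^sup>+ z. ennreal \<bar>F j e z\<bar> \<partial>(Y \<Otimes>\<^sub>M PiM (fold_block b j) (\<lambda>_. P)))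
       = (\<integral>\<^sup>+ z. ennreal \<bar>F j e z\<bar> \<partial>(distr M (Y \<Otimes>\<^sub>M PiM (fold_block b j) (\<lambda>_. P)) (\<lambda>w. (T j w, restrict (\<lambda>i. Z i w) (fold_block b j)))))"
      by (simp only: Dj[OF j])
    also have "\<dots> = (\<integral>\<^sup>+ w. ennreal \<bar>Lw j w \<bullet> e\<bar> \<partial>M)"
      unfolding LF by (rule nn_integral_distr[OF Phim[OF j]]) (use Fm[of j e] in measurable)
    finally have "(\<integral>\<^sup>+ w. ennreal \<bar>Lw j w \<bullet> e\<bar> \<partial>M) = (\<integral>\<^sup>+ z. ennreal \<bar>F j e z\<bar> \<partial>(Y \<Otimes>\<^sub>M PiM (fold_block b j) (\<lambda>_. P)))" by simp
    also have "\<dots> \<le> (\<integral>\<^sup>+ u. ennreal (sqrt (V e u / K)) \<partial>Y)" by (rule bound_je[OF j e])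
    finally show ?thesis .
  qed
  have AEV: "AE w in M. \<forall>e\<in>Basis. 0 \<le> V e (T 0 w)"
  proof -
    have "AE u in distr M Y (T 0). \<forall>e\<in>Basis. 0 \<le> V e u" unfolding DY[OF K_pos] using good
      by eventually_elim (auto simp: V_def)
    from AE_distrD[OF T0m this] show ?thesis .
  qed
  define B where "B = (\<Sum>e\<in>Basis. \<integral>w. sqrt (real K * cond_var_coord PX G (f 0 w) fb e) \<partial>M)"
  have IeK: "(\<integral>\<^sup>+ u. ennreal (sqrt (real K * V e u)) \<partial>Y) = ennreal (\<integral>w. sqrt (real K * cond_var_coord PX G (f 0 w) fb e) \<partial>M)"
    and Ienn: "0 \<le> (\<integral>w. sqrt (real K * cond_var_coord PX G (f 0 w) fb e) \<partial>M)"
    if e: "e \<in> Basis" for e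
  proof -
    have AEn: "AE w in M. 0 \<le> sqrt (real K * cond_var_coord PX G (f 0 w) fb e)"
      using AEV by eventually_elim (use e in \<open>auto simp: V_def fT\<close>)
    have "(\<integral>\<^sup>+ u. ennreal (sqrt (real K * V e u)) \<partial>Y) = (\<integral>\<^sup>+ w. ennreal (sqrt (real K * V e (T 0 w))) \<partial>M)"
    proof -
      have "(\<integral>\<^sup>+ u. ennreal (sqrt (real K * V e u)) \<partial>Y) = (\<integral>\<^sup>+ u. ennreal (sqrt (real K * V e u)) \<partial>distr M Y (T 0))"
        by (simp only: DY[OF K_pos])
      also have "\<dots> = (\<integral>\<^sup>+ w. ennreal (sqrt (real K * V e (T 0 w))) \<partial>M)"
        by (rule nn_integral_distr[OF T0m]) (use Vm[of e] in measurable)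
      finally show ?thesis .
    qed
    also have "\<dots> = (\<integral>\<^sup>+ w. ennreal (sqrt (real K * cond_var_coord PX G (f 0 w) fb e)) \<partial>M)"
      by (simp add: V_def fT)
    also have "\<dots> = ennreal (\<integral>w. sqrt (real K * cond_var_coord PX G (f 0 w) fb e) \<partial>M)"
      using stab_int[OF e] AEn unfolding fb_def by (intro nn_integral_eq_integral) auto
    finally show "(\<integral>\<^sup>+ u. ennreal (sqrt (real K * V e u)) \<partial>Y) = ennreal (\<integral>w. sqrt (real K * cond_var_coord PX G (f 0 w) fb e) \<partial>M)" .
    show "0 \<le> (\<integral>w. sqrt (real K * cond_var_coord PX G (f 0 w) fb e) \<partial>M)"
      using AEn by (rule integral_nonneg_AE)
  qed
  define U where "U = (\<lambda>w. \<Sum>j<K. \<Sum>e\<in>Basis. \<bar>Lw j w \<bullet> e\<bar>)"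
  have Um[measurable]: "U \<in> borel_measurable M"
    unfolding U_def using Lm by (intro borel_measurable_sum borel_measurable_abs) auto
  have intU: "(\<integral>\<^sup>+ w. ennreal (U w) \<partial>M) \<le> ennreal B"
  proof -
    have "(\<integral>\<^sup>+ w. ennreal (U w) \<partial>M) = (\<integral>\<^sup>+ w. (\<Sum>j<K. \<Sum>e\<in>Basis. ennreal \<bar>Lw j w \<bullet> e\<bar>) \<partial>M)"
      unfolding U_def by (intro nn_integral_cong) (simp add: sum_nonneg)
    also have "\<dots> = (\<Sum>j<K. \<Sum>e\<in>Basis. \<integral>\<^sup>+ w. ennreal \<bar>Lw j w \<bullet> e\<bar> \<partial>M)"
    proof -
      have m: "(\<lambda>w. ennreal \<bar>Lw j w \<bullet> e\<bar>) \<in> borel_measurable M" if "j < K" for j e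
        using Lm[OF that, of e] by measurable
      have m2: "(\<lambda>w. \<Sum>e\<in>Basis. ennreal \<bar>Lw j w \<bullet> e\<bar>) \<in> borel_measurable M" if "j < K" for j
        using m[OF that] by (intro borel_measurable_sum) auto
      show ?thesis
        by (subst nn_integral_sum) (auto intro!: sum.cong m2 nn_integral_sum m simp del: sum_ennreal)
    qed
    also have "\<dots> \<le> (\<Sum>j<K. \<Sum>e\<in>Basis. \<integral>\<^sup>+ u. ennreal (sqrt (V e u / K)) \<partial>Y)"
      using each by (intro sum_mono) auto
    also have "\<dots> = (\<Sum>e\<in>Basis. of_nat K * \<integral>\<^sup>+ u. ennreal (sqrt (V e u / K)) \<partial>Y)"
      by (subst sum.swap) simp
    also have "\<dots> = (\<Sum>e\<in>Basis. \<integral>\<^sup>+ u. ennreal (sqrt (real K * V e u)) \<partial>Y)"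
    proof (intro sum.cong refl)
      fix e :: 'd
      have "of_nat K * (\<integral>\<^sup>+ u. ennreal (sqrt (V e u / K)) \<partial>Y) = (\<integral>\<^sup>+ u. ennreal (real K) * ennreal (sqrt (V e u / K)) \<partial>Y)"
        by (subst nn_integral_cmult) (use Vm[of e] in \<open>measurable, simp add: ennreal_of_nat_eq_real_of_nat\<close>)
      also have "\<dots> = (\<integral>\<^sup>+ u. ennreal (sqrt (real K * V e u)) \<partial>Y)"
      proof (intro nn_integral_cong)
        fix u
        have "real K * sqrt (V e u / K) = sqrt ((real K)\<^sup>2) * sqrt (V e u / K)" by simp
        also have "\<dots> = sqrt ((real K)\<^sup>2 * (V e u / K))" by (simp only: real_sqrt_mult)
        also have "\<dots> = sqrt (real K * V e u)" using K_pos by (simp add: power2_eq_square)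
        finally have "real K * sqrt (V e u / K) = sqrt (real K * V e u)" .
        then show "ennreal (real K) * ennreal (sqrt (V e u / K)) = ennreal (sqrt (real K * V e u))"
          by (simp add: ennreal_mult'[symmetric])
      qed
      finally show "of_nat K * (\<integral>\<^sup>+ u. ennreal (sqrt (V e u / K)) \<partial>Y) = (\<integral>\<^sup>+ u. ennreal (sqrt (real K * V e u)) \<partial>Y)" .
    qed
    also have "\<dots> = ennreal B" unfolding B_def using IeK Ienn by (simp add: sum_ennreal)
    finally show ?thesis .
  qed
  have Bnn: "0 \<le> B" unfolding B_def using Ienn by (intro sum_nonneg) auto
  have sub: "{w \<in> space M. norm (\<Sum>j<K. L_fold n (fold_block (n div K) j) PX G (f j w) (fbar M (f 0)) (\<lambda>i. fst (Z i w))) > \<epsilon>}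
      \<subseteq> {w \<in> space M. 1 \<le> ennreal (1 / \<epsilon>) * ennreal (U w)}"
  proof safe
    fix w assume w: "w \<in> space M"
      and gt: "norm (\<Sum>j<K. L_fold n (fold_block (n div K) j) PX G (f j w) (fbar M (f 0)) (\<lambda>i. fst (Z i w))) > \<epsilon>"
    have "norm (\<Sum>j<K. Lw j w) \<le> (\<Sum>j<K. norm (Lw j w))" by (rule norm_sum)
    also have "\<dots> \<le> U w" unfolding U_def by (intro sum_mono norm_le_l1)
    finally have "\<epsilon> < U w" using gt unfolding Lw_def b_def fb_def by simp
    then have "1 \<le> U w / \<epsilon>" using eps by simp
    then show "1 \<le> ennreal (1 / \<epsilon>) * ennreal (U w)"
      using eps by (simp add: ennreal_mult'[symmetric] ennreal_1[symmetric] del: ennreal_1)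
  qed
  have "emeasure M {w \<in> space M. norm (\<Sum>j<K. L_fold n (fold_block (n div K) j) PX G (f j w) (fbar M (f 0)) (\<lambda>i. fst (Z i w))) > \<epsilon>}
      \<le> emeasure M {w \<in> space M. 1 \<le> ennreal (1 / \<epsilon>) * ennreal (U w)}"
    by (rule emeasure_mono[OF sub]) measurable
  also have "\<dots> \<le> ennreal (1 / \<epsilon>) * (\<integral>\<^sup>+ w. ennreal (U w) * indicator (space M) w \<partial>M)"
    by (rule nn_integral_Markov_inequality) auto
  also have "(\<integral>\<^sup>+ w. ennreal (U w) * indicator (space M) w \<partial>M) = (\<integral>\<^sup>+ w. ennreal (U w) \<partial>M)"
    by (intro nn_integral_cong) simp
  also have "ennreal (1 / \<epsilon>) * \<dots> \<le> ennreal (1 / \<epsilon>) * ennreal B"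
    by (intro mult_left_mono intU) simp
  also have "\<dots> = ennreal (B / \<epsilon>)" using eps by (simp add: ennreal_mult'[symmetric])
  finally have "ennreal (measure M {w \<in> space M. norm (\<Sum>j<K. L_fold n (fold_block (n div K) j) PX G (f j w) (fbar M (f 0)) (\<lambda>i. fst (Z i w))) > \<epsilon>})
      \<le> ennreal (B / \<epsilon>)" by (simp add: M.emeasure_eq_measure)
  then show ?thesis using Bnn eps unfolding B_def fb_def by (simp add: ennreal_le_iff)
qed

theorem lemma4:
  fixes l :: "'d::euclidean_space \<Rightarrow> 'x \<Rightarrow> 'y::euclidean_space \<Rightarrow> real"
    and \<theta> :: 'd
    and SX :: "'x measure"
    and P :: "('x \<times> 'y) measure"
    and M :: "nat \<Rightarrow> 'w measure"
    and N K :: "nat \<Rightarrow> nat"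
    and Z :: "nat \<Rightarrow> nat \<Rightarrow> 'w \<Rightarrow> 'x \<times> 'y"
    and R :: "nat \<Rightarrow> 'r measure"
    and xi :: "nat \<Rightarrow> nat \<Rightarrow> 'w \<Rightarrow> 'r"
    and A :: "nat \<Rightarrow> (nat \<Rightarrow> 'x \<times> 'y) \<Rightarrow> 'r \<Rightarrow> 'x \<Rightarrow> 'y"
  defines "PX \<equiv> distr P SX fst"
    and "G \<equiv> grad l \<theta>"
    and "f \<equiv> (\<lambda>m. fitted (A m) (N m) (N m div K m) (Z m) (xi m))"
  assumes P_prob: "prob_space P"
    and P_sets: "sets P = sets (SX \<Otimes>\<^sub>M (borel :: 'y measure))"
    and l_diff: "\<And>t x y. (\<lambda>s. l s x y) differentiable (at t)"
    and G_meas: "(\<lambda>(x, y). G x y) \<in> borel_measurable (SX \<Otimes>\<^sub>M (borel :: 'y measure))"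
    and M_prob: "\<And>m. prob_space (M m)"
    and K_pos: "\<And>m. 0 < K m"
    and K_dvd: "\<And>m. K m dvd N m"
    and N_lim: "filterlim N at_top sequentially"
    and Z_meas: "\<And>m i. i < N m \<Longrightarrow> Z m i \<in> measurable (M m) P"
    and Z_distr: "\<And>m i. i < N m \<Longrightarrow> distr (M m) P (Z m i) = P"
    and Z_indep: "\<And>m. prob_space.indep_vars (M m) (\<lambda>_. P) (Z m) {..<N m}"
    and xi_meas: "\<And>m j. j < K m \<Longrightarrow> xi m j \<in> measurable (M m) (R m)"
    and xi_distr: "\<And>m j. j < K m \<Longrightarrow> distr (M m) (R m) (xi m j) = R m"
    and xi_indep: "\<And>m. prob_space.indep_vars (M m) (\<lambda>_. R m) (xi m) {..<K m}"
    and data_xi_indep: "\<And>m B C. B \<in> sets (PiM {..<N m} (\<lambda>_. P)) \<Longrightarrow>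
          C \<in> sets (PiM {..<K m} (\<lambda>_. R m)) \<Longrightarrow>
          measure (M m) {w \<in> space (M m). (\<lambda>i\<in>{..<N m}. Z m i w) \<in> B \<and> (\<lambda>j\<in>{..<K m}. xi m j w) \<in> C}
          = measure (M m) {w \<in> space (M m). (\<lambda>i\<in>{..<N m}. Z m i w) \<in> B}
            * measure (M m) {w \<in> space (M m). (\<lambda>j\<in>{..<K m}. xi m j w) \<in> C}"
    and A_meas: "\<And>m. (\<lambda>((d, r), x). A m d r x) \<in> borel_measurable
          ((PiM {..< N m - N m div K m} (\<lambda>_. P) \<Otimes>\<^sub>M R m) \<Otimes>\<^sub>M SX)"
    and fbar_int: "\<And>m x. x \<in> space SX \<Longrightarrow> integrable (M m) (\<lambda>w. f m 0 w x)"
    and G_f_L2: "\<And>m. integrable (M m \<Otimes>\<^sub>M PX) (\<lambda>(w, x). (norm (G x (f m 0 w x)))\<^sup>2)"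
    and G_fbar_L2: "\<And>m. integrable PX (\<lambda>x. (norm (G x (fbar (M m) (f m 0) x)))\<^sup>2)"
    and stab_int: "\<And>m e. e \<in> Basis \<Longrightarrow> integrable (M m)
          (\<lambda>w. sqrt (real (K m) * cond_var_coord PX G (f m 0 w) (fbar (M m) (f m 0)) e))"
    and stab: "\<And>e. e \<in> Basis \<Longrightarrow>
          (\<lambda>m. \<integral>w. sqrt (real (K m) * cond_var_coord PX G (f m 0 w) (fbar (M m) (f m 0)) e) \<partial>M m)
            \<longlonglongrightarrow> 0"
  shows "\<forall>\<epsilon>>0. (\<lambda>m. measure (M m) {w \<in> space (M m).
            norm (\<Sum>j<K m. L_fold (N m) (fold_block (N m div K m) j) PX G (f m j w)
                               (fbar (M m) (f m 0)) (\<lambda>i. fst (Z m i w))) > \<epsilon>}) \<longlonglongrightarrow> 0"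
proof (intro allI impI)
  fix \<epsilon> :: real assume eps: "\<epsilon> > 0"
  let ?B = "\<lambda>m. (\<Sum>e\<in>Basis. \<integral>w. sqrt (real (K m) * cond_var_coord PX G (f m 0 w) (fbar (M m) (f m 0)) e) \<partial>M m) / \<epsilon>"
  have ev: "eventually (\<lambda>m. measure (M m) {w \<in> space (M m).
            norm (\<Sum>j<K m. L_fold (N m) (fold_block (N m div K m) j) PX G (f m j w)
                               (fbar (M m) (f m 0)) (\<lambda>i. fst (Z m i w))) > \<epsilon>} \<le> ?B m) sequentially"
  proof -
    have "eventually (\<lambda>m. 1 \<le> N m) sequentially" using N_lim by (simp add: filterlim_at_top)
    then show ?thesis
    proof eventually_elim
      case (elim m)
      then have npos: "0 < N m" by simp
      show ?case unfolding f_def PX_def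
        by (rule per_m[where G=G and SX=SX and P=P and M="M m" and n="N m" and K="K m" and Z="Z m"
              and R="R m" and xi="xi m" and A="A m"])
           (use P_sets G_meas M_prob K_pos K_dvd npos Z_meas Z_distr Z_indep xi_meas xi_distr xi_indep
              data_xi_indep A_meas G_f_L2 G_fbar_L2 stab_int eps in \<open>simp_all add: f_def PX_def\<close>)
    qed
  qed
  have lim: "?B \<longlonglongrightarrow> 0"
    using stab by (intro tendsto_divide_zero tendsto_null_sum) auto
  show "(\<lambda>m. measure (M m) {w \<in> space (M m).
            norm (\<Sum>j<K m. L_fold (N m) (fold_block (N m div K m) j) PX G (f m j w)
                               (fbar (M m) (f m 0)) (\<lambda>i. fst (Z m i w))) > \<epsilon>}) \<longlonglongrightarrow> 0"
    by (rule tendsto_sandwich[OF _ ev tendsto_const lim]) simp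
qed

end
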